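(* Let $n=2k$ and let $X\subset\mathbb{P}^{n-1}_\mathbb{C}$ be the smooth quadric $\sum_{j=1}^k z_{2j-1}z_{2j}=0$, with the action of $T=(S^1)^k$ (restricted from $T_\mathbb{C}=(\mathbb{C}^* )^k$) given by $t\cdot(z_1:\dots:z_n)=(t_1z_1:t_1^{-1}z_2:\dots:t_kz_{2k-1}:t_k^{-1}z_{2k})$, moment map \[\mu(z_1:\dots:z_n)=\frac{1}{\sum_{i=1}^n|z_i|^2}\sum_{j=1}^k(|z_{2j-1}|^2-|z_{2j}|^2)e_j,\] and $P=\mu(X)=\mathrm{conv}(\pm e_1,\dots,\pm e_k)$. Let $q\colon\mathbb{P}^{n-1}_\mathbb{C}\dashrightarrow\mathbb{P}^{k-2}_\mathbb{C}$ be the rational map $(z_1:\dots:z_n)\mapsto(z_3z_4:\dots:z_{n-1}z_n)$. Then for every $u$ in the interior $P^\circ$ of $P$, $q$ is defined on $\mu^{-1}(u)\cap X$ and $q|_{\mu^{-1}(u)}\colon\mu^{-1}(u)\to\mathbb{P}^{k-2}_\mathbb{C}$ is a quotient map to the $T$-orbit space of the fibre, i.e. two points of $\mu^{-1}(u)$ have the same image under $q$ if and only if they lie in the same $T$-orbit.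
   Context: $e_j$ denotes the $j$-th standard basis vector of $\mathbb{R}^k$. *)

theory Defs
  imports "HOL-Analysis.Analysis"
begin

text \<open>Homogeneous coordinates of P^{n-1}, n = 2k, are grouped in pairs indexed by
  the torus index type 'k:  a j = z_{2j-1},  b j = z_{2j}.\<close>

definition nonzero_pt :: "('k \<Rightarrow> complex) \<Rightarrow> ('k \<Rightarrow> complex) \<Rightarrow> bool" where
  "nonzero_pt a b \<longleftrightarrow> (\<exists>j. a j \<noteq> 0 \<or> b j \<noteq> 0)"

definition proj_eq2 :: "('k \<Rightarrow> complex) \<Rightarrow> ('k \<Rightarrow> complex) \<Rightarrow> ('k \<Rightarrow> complex) \<Rightarrow> ('k \<Rightarrow> complex) \<Rightarrow> bool" where
  "proj_eq2 a b a' b' \<longleftrightarrow> (\<exists>c. c \<noteq> 0 \<and> (\<forall>j. a' j = c * a j \<and> b' j = c * b j))"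

definition proj_eq :: "('i \<Rightarrow> complex) \<Rightarrow> ('i \<Rightarrow> complex) \<Rightarrow> bool" where
  "proj_eq v w \<longleftrightarrow> (\<exists>c. c \<noteq> 0 \<and> (\<forall>i. w i = c * v i))"

definition in_quadric :: "('k::finite \<Rightarrow> complex) \<Rightarrow> ('k \<Rightarrow> complex) \<Rightarrow> bool" where
  "in_quadric a b \<longleftrightarrow> nonzero_pt a b \<and> (\<Sum>j\<in>UNIV. a j * b j) = 0"

definition moment :: "('k::finite \<Rightarrow> complex) \<Rightarrow> ('k \<Rightarrow> complex) \<Rightarrow> real^'k" where
  "moment a b = (\<chi> j. ((cmod (a j))\<^sup>2 - (cmod (b j))\<^sup>2) /
                      (\<Sum>i\<in>UNIV. (cmod (a i))\<^sup>2 + (cmod (b i))\<^sup>2))"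

definition polyP :: "(real^'k::finite) set" where
  "polyP = convex hull ({axis j 1 | j. True} \<union> {- axis j 1 | j. True})"

definition torus :: "('k \<Rightarrow> complex) set" where
  "torus = {t. \<forall>j. cmod (t j) = 1}"

definition act_a :: "('k \<Rightarrow> complex) \<Rightarrow> ('k \<Rightarrow> complex) \<Rightarrow> ('k \<Rightarrow> complex)" where
  "act_a t a = (\<lambda>j. t j * a j)"

definition act_b :: "('k \<Rightarrow> complex) \<Rightarrow> ('k \<Rightarrow> complex) \<Rightarrow> ('k \<Rightarrow> complex)" where
  "act_b t b = (\<lambda>j. inverse (t j) * b j)"

text \<open>The rational map q to P^{k-2}: coordinates z_{2j-1} z_{2j} for j different from the
  distinguished index j0 (playing the role of j = 1). The target P^{k-2} has homogeneous
  coordinates indexed by the k-1 elements different from j0; we encode them as functions on 'k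
  whose j0-coordinate is 0. q is defined at a point iff this vector is nonzero.\<close>
definition qmap :: "'k \<Rightarrow> ('k \<Rightarrow> complex) \<Rightarrow> ('k \<Rightarrow> complex) \<Rightarrow> ('k \<Rightarrow> complex)" where
  "qmap j0 a b = (\<lambda>j. if j = j0 then 0 else a j * b j)"

end

theory Submission
  imports Defs
begin

lemma polyP_sub: "polyP \<subseteq> {v::real^'k::finite. (\<Sum>j\<in>UNIV. \<bar>v$j\<bar>) \<le> 1}"
  unfolding polyP_def
proof (rule hull_minimal)
  show "{axis j 1 | j. True} \<union> {- axis j 1 | j. True} \<subseteq> {v::real^'k. (\<Sum>j\<in>UNIV. \<bar>v$j\<bar>) \<le> 1}"
  proof -
    have "(\<Sum>i\<in>UNIV. \<bar>(axis j (1::real) :: real^'k)$i\<bar>) = 1" for j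
    proof -
      have "(\<Sum>i\<in>UNIV. \<bar>(axis j (1::real) :: real^'k)$i\<bar>) = (\<Sum>i\<in>UNIV. if i = j then 1 else 0)"
        by (rule sum.cong) (auto simp: axis_def)
      thus ?thesis by simp
    qed
    thus ?thesis by auto
  qed
  show "convex {v::real^'k. (\<Sum>j\<in>UNIV. \<bar>v$j\<bar>) \<le> 1}"
    unfolding convex_def
  proof (clarify)
    fix x y :: "real^'k" and s t :: real
    assume h: "(\<Sum>j\<in>UNIV. \<bar>x$j\<bar>) \<le> 1" "(\<Sum>j\<in>UNIV. \<bar>y$j\<bar>) \<le> 1" "0 \<le> s" "0 \<le> t" "s + t = 1"
    have "(\<Sum>j\<in>UNIV. \<bar>(s *\<^sub>R x + t *\<^sub>R y)$j\<bar>) \<le> (\<Sum>j\<in>UNIV. s * \<bar>x$j\<bar> + t * \<bar>y$j\<bar>)"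
      apply (rule sum_mono) using h by (simp add: abs_mult abs_triangle_ineq[THEN order_trans])
    also have "\<dots> = s * (\<Sum>j\<in>UNIV. \<bar>x$j\<bar>) + t * (\<Sum>j\<in>UNIV. \<bar>y$j\<bar>)"
      by (simp add: sum.distrib sum_distrib_left)
    also have "\<dots> \<le> s * 1 + t * 1"
      using h by (intro add_mono mult_left_mono) auto
    finally show "(\<Sum>j\<in>UNIV. \<bar>(s *\<^sub>R x + t *\<^sub>R y)$j\<bar>) \<le> 1" using h by simp
  qed
qed

lemma not_interior:
  fixes u :: "real^'k::finite"
  assumes "(\<Sum>j\<in>UNIV. \<bar>u$j\<bar>) = 1" "u \<in> interior polyP"
  shows False
proof -
  obtain e where e: "e > 0" "ball u e \<subseteq> polyP"
    using assms(2) by (meson interior_subset open_contains_ball open_interior subset_trans)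
  fix j :: 'k
  define s :: real where "s = (if u$j \<ge> 0 then 1 else -1)"
  define v where "v = u + (e/2 * s) *\<^sub>R axis j 1"
  have "dist u v < e" using e(1) by (simp add: v_def dist_norm s_def)
  hence "v \<in> polyP" using e by auto
  hence le: "(\<Sum>i\<in>UNIV. \<bar>v$i\<bar>) \<le> 1" using polyP_sub by blast
  have "(\<Sum>i\<in>UNIV. \<bar>v$i\<bar>) = (\<Sum>i\<in>UNIV. \<bar>u$i\<bar> + (if i = j then e/2 else 0))"
    by (rule sum.cong) (use e(1) in \<open>auto simp: v_def axis_def s_def abs_if\<close>)
  also have "\<dots> = 1 + e/2" using assms(1) by (simp add: sum.distrib)
  finally show False using le e by simp
qed

lemma key_real:
  fixes x y X Y :: "'k::finite \<Rightarrow> real" and l :: real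
  assumes nn: "\<And>j. x j \<ge> 0" "\<And>j. y j \<ge> 0" "\<And>j. X j \<ge> 0" "\<And>j. Y j \<ge> 0"
    and p: "\<And>j. X j * Y j = x j * y j"
    and d: "\<And>j. X j - Y j = l * (x j - y j)"
    and s: "(\<Sum>j\<in>UNIV. X j + Y j) = l * (\<Sum>j\<in>UNIV. x j + y j)"
    and l: "l > 0" and j1: "x j1 * y j1 > 0"
  shows "X j = x j \<and> Y j = y j"
proof -
  have sq: "(X j + Y j)^2 = l^2 * (x j - y j)^2 + 4 * (x j * y j)" for j
  proof -
    have "(X j + Y j)^2 = (X j - Y j)^2 + 4 * (X j * Y j)" by algebra
    thus ?thesis using p[of j] d[of j] by (simp add: power_mult_distrib)
  qed
  have sq2: "(l * (x j + y j))^2 = l^2 * (x j - y j)^2 + 4 * l^2 * (x j * y j)" for j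
    by algebra
  have "l = 1"
  proof (rule ccontr)
    assume "l \<noteq> 1"
    hence "l < 1 \<or> l > 1" by linarith
    thus False
    proof
      assume l1: "l < 1"
      have "l^2 < 1" using l l1 by (simp add: power_less_one_iff)
      have le: "l * (x j + y j) \<le> X j + Y j" for j
      proof (rule power2_le_imp_le)
        have "l^2 * (x j * y j) \<le> x j * y j" using \<open>l^2 < 1\<close> nn[of j]
          by (simp add: mult_left_le_one_le)
        thus "(l * (x j + y j))^2 \<le> (X j + Y j)^2" using sq[of j] sq2[of j] by linarith
        show "0 \<le> X j + Y j" using nn[of j] by simp
      qed
      have lt: "l * (x j1 + y j1) < X j1 + Y j1"
      proof (rule power2_less_imp_less)
        have "l^2 * (x j1 * y j1) < x j1 * y j1" using mult_strict_right_mono[of "l^2" 1 "x j1*y j1"] \<open>l^2 < 1\<close> j1 by simp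
        thus "(l * (x j1 + y j1))^2 < (X j1 + Y j1)^2" using sq[of j1] sq2[of j1] by linarith
        show "0 \<le> X j1 + Y j1" using nn[of j1] by simp
      qed
      have "(\<Sum>j\<in>UNIV. l * (x j + y j)) < (\<Sum>j\<in>UNIV. X j + Y j)"
        by (rule sum_strict_mono_ex1) (use le lt in auto)
      thus False using s by (simp add: sum_distrib_left)
    next
      assume l1: "l > 1"
      have "l^2 > 1" using l l1 by (simp add: one_less_power)
      have le: "X j + Y j \<le> l * (x j + y j)" for j
      proof (rule power2_le_imp_le)
        have "x j * y j \<le> l^2 * (x j * y j)" using mult_right_mono[of 1 "l^2" "x j * y j"] \<open>l^2 > 1\<close> nn[of j]
          by simp
        thus "(X j + Y j)^2 \<le> (l * (x j + y j))^2" using sq[of j] sq2[of j] by linarith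
        show "0 \<le> l * (x j + y j)" using nn[of j] l by simp
      qed
      have lt: "X j1 + Y j1 < l * (x j1 + y j1)"
      proof (rule power2_less_imp_less)
        have "x j1 * y j1 < l^2 * (x j1 * y j1)" using mult_strict_right_mono[of 1 "l^2" "x j1*y j1"] \<open>l^2 > 1\<close> j1 by simp
        thus "(X j1 + Y j1)^2 < (l * (x j1 + y j1))^2" using sq[of j1] sq2[of j1] by linarith
        show "0 \<le> l * (x j1 + y j1)" using nn[of j1] l by simp
      qed
      have "(\<Sum>j\<in>UNIV. X j + Y j) < (\<Sum>j\<in>UNIV. l * (x j + y j))"
        by (rule sum_strict_mono_ex1) (use le lt in auto)
      thus False using s by (simp add: sum_distrib_left)
    qed
  qed
  have "(X j + Y j)^2 = (x j + y j)^2" using sq[of j] sq2[of j] \<open>l = 1\<close> by simp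
  hence "X j + Y j = x j + y j" using nn[of j] by (simp add: power2_eq_iff_nonneg)
  thus ?thesis using d[of j] \<open>l = 1\<close> by simp
qed

definition NN :: "('k::finite \<Rightarrow> complex) \<Rightarrow> ('k \<Rightarrow> complex) \<Rightarrow> real" where
  "NN a b = (\<Sum>i\<in>UNIV. (cmod (a i))\<^sup>2 + (cmod (b i))\<^sup>2)"

lemma NN_pos: "in_quadric a b \<Longrightarrow> NN a b > 0"
proof -
  assume "in_quadric a b"
  then obtain j where j: "a j \<noteq> 0 \<or> b j \<noteq> 0" by (auto simp: in_quadric_def nonzero_pt_def)
  show ?thesis unfolding NN_def
    by (rule sum_pos2[of UNIV j]) (use j in \<open>auto simp: add_pos_nonneg add_nonneg_pos\<close>)
qed

lemma moment_eq:
  assumes "in_quadric a b" "moment a b = u"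
  shows "(cmod (a j))\<^sup>2 - (cmod (b j))\<^sup>2 = u$j * NN a b"
proof -
  have "u$j = ((cmod (a j))\<^sup>2 - (cmod (b j))\<^sup>2) / NN a b"
    using assms(2) by (auto simp: moment_def NN_def)
  thus ?thesis using NN_pos[OF assms(1)] by (simp add: field_simps)
qed

lemma some_nonzero:
  assumes "in_quadric a b" "moment a b = u" "u \<in> interior polyP"
  shows "\<exists>j. j \<noteq> j0 \<and> a j * b j \<noteq> 0"
proof (rule ccontr)
  assume "\<not> ?thesis"
  hence z: "\<And>j. j \<noteq> j0 \<Longrightarrow> a j * b j = 0" by blast
  have "(\<Sum>j\<in>UNIV. a j * b j) = a j0 * b j0 + (\<Sum>j\<in>UNIV - {j0}. a j * b j)"
    by (simp add: sum.remove)
  also have "(\<Sum>j\<in>UNIV - {j0}. a j * b j) = 0" using z by (intro sum.neutral) auto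
  finally have "a j0 * b j0 = 0" using assms(1) by (simp add: in_quadric_def)
  hence z2: "a j = 0 \<or> b j = 0" for j using z[of j] by (cases "j = j0") auto
  have N: "NN a b > 0" using NN_pos[OF assms(1)] .
  have "\<bar>u$j\<bar> = ((cmod (a j))\<^sup>2 + (cmod (b j))\<^sup>2) / NN a b" for j
  proof -
    have "\<bar>u$j\<bar> * NN a b = \<bar>(cmod (a j))\<^sup>2 - (cmod (b j))\<^sup>2\<bar>"
      using moment_eq[OF assms(1,2), of j] N by (simp add: abs_mult)
    also have "\<dots> = (cmod (a j))\<^sup>2 + (cmod (b j))\<^sup>2" using z2[of j] by auto
    finally show ?thesis using N by (simp add: field_simps)
  qed
  hence "(\<Sum>j\<in>UNIV. \<bar>u$j\<bar>) = (\<Sum>j\<in>UNIV. ((cmod (a j))\<^sup>2 + (cmod (b j))\<^sup>2) / NN a b)"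
    by simp
  also have "\<dots> = NN a b / NN a b"
    unfolding sum_divide_distrib[symmetric] NN_def ..
  finally have "(\<Sum>j\<in>UNIV. \<bar>u$j\<bar>) = NN a b / NN a b" .
  hence "(\<Sum>j\<in>UNIV. \<bar>u$j\<bar>) = 1" using N by simp
  thus False using not_interior assms(3) by blast
qed

lemma forward:
  assumes q1: "in_quadric a b" "moment a b = u" and q2: "in_quadric a' b'" "moment a' b' = u"
    and u: "u \<in> interior polyP"
    and c: "c \<noteq> 0" "\<And>i. qmap j0 a' b' i = c * qmap j0 a b i"
  shows "\<exists>t\<in>torus. proj_eq2 (act_a t a) (act_b t b) a' b'"
proof -
  have w1: "a' j * b' j = c * (a j * b j)" if "j \<noteq> j0" for j
    using c(2)[of j] that by (simp add: qmap_def)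
  have w: "a' j * b' j = c * (a j * b j)" for j
  proof (cases "j = j0")
    case False thus ?thesis using w1 by blast
  next
    case True
    have e1: "a' j0 * b' j0 + (\<Sum>j\<in>UNIV - {j0}. a' j * b' j) = 0"
      using q2(1) sum.remove[of UNIV j0 "\<lambda>j. a' j * b' j"] by (simp add: in_quadric_def)
    have e2: "a j0 * b j0 + (\<Sum>j\<in>UNIV - {j0}. a j * b j) = 0"
      using q1(1) sum.remove[of UNIV j0 "\<lambda>j. a j * b j"] by (simp add: in_quadric_def)
    have "(\<Sum>j\<in>UNIV - {j0}. a' j * b' j) = c * (\<Sum>j\<in>UNIV - {j0}. a j * b j)"
      by (simp add: sum_distrib_left w1)
    hence hS: "(\<Sum>j\<in>UNIV - {j0}. a' j * b' j) = c * (\<Sum>j\<in>UNIV - {j0}. a j * b j)" .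
    have A: "a' j0 * b' j0 = - (\<Sum>j\<in>UNIV - {j0}. a' j * b' j)" using e1 by (simp add: eq_neg_iff_add_eq_0)
    have B: "a j0 * b j0 = - (\<Sum>j\<in>UNIV - {j0}. a j * b j)" using e2 by (simp add: eq_neg_iff_add_eq_0)
    have "a' j0 * b' j0 = c * (a j0 * b j0)" using A B hS by simp
    thus ?thesis using True by simp
  qed
  define r where "r = cmod c"
  have r: "r > 0" using c(1) by (simp add: r_def)
  define N where "N = NN a b"
  define N' where "N' = NN a' b'"
  have N: "N > 0" "N' > 0" using NN_pos q1 q2 by (auto simp: N_def N'_def)
  obtain j1 where j1: "a j1 * b j1 \<noteq> 0" using some_nonzero[OF q1 u] by blast
  have sq: "(cmod (a' j))\<^sup>2 = r * (cmod (a j))\<^sup>2 \<and> (cmod (b' j))\<^sup>2 = r * (cmod (b j))\<^sup>2" for j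
  proof -
    have "(cmod (a' j))\<^sup>2 / r = (cmod (a j))\<^sup>2 \<and> (cmod (b' j))\<^sup>2 / r = (cmod (b j))\<^sup>2"
    proof (rule key_real[where x = "\<lambda>j. (cmod (a j))\<^sup>2" and y = "\<lambda>j. (cmod (b j))\<^sup>2"
          and X = "\<lambda>j. (cmod (a' j))\<^sup>2 / r" and Y = "\<lambda>j. (cmod (b' j))\<^sup>2 / r"
          and l = "N' / (r * N)"])
      fix j
      show "(cmod (a' j))\<^sup>2 / r * ((cmod (b' j))\<^sup>2 / r) = (cmod (a j))\<^sup>2 * (cmod (b j))\<^sup>2"
      proof -
        have "cmod (a' j) * cmod (b' j) = r * (cmod (a j) * cmod (b j))"
          using w[of j] by (metis norm_mult r_def)
        hence "(cmod (a' j) * cmod (b' j))^2 = r^2 * (cmod (a j) * cmod (b j))^2"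
          by (simp add: power_mult_distrib)
        thus ?thesis using r by (simp add: field_simps power_mult_distrib power2_eq_square)
      qed
      show "(cmod (a' j))\<^sup>2 / r - (cmod (b' j))\<^sup>2 / r = N' / (r * N) * ((cmod (a j))\<^sup>2 - (cmod (b j))\<^sup>2)"
        using moment_eq[OF q1, of j] moment_eq[OF q2, of j] N r
        by (simp add: N_def N'_def field_simps)
      show "(\<Sum>j\<in>UNIV. (cmod (a' j))\<^sup>2 / r + (cmod (b' j))\<^sup>2 / r) =
            N' / (r * N) * (\<Sum>j\<in>UNIV. (cmod (a j))\<^sup>2 + (cmod (b j))\<^sup>2)"
        using N r by (simp add: N_def N'_def NN_def add_divide_distrib[symmetric] sum_divide_distrib[symmetric])
      show "0 < N' / (r * N)" using N r by simp
      show "0 < (cmod (a j1))\<^sup>2 * (cmod (b j1))\<^sup>2" using j1 by simp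
    qed (use r in auto)
    thus ?thesis using r by (simp add: field_simps)
  qed
  define s where "s = csqrt c"
  have s2: "s * s = c" unfolding s_def by (metis power2_csqrt power2_eq_square)
  have sn: "cmod s = sqrt r"
  proof -
    have "cmod s ^ 2 = r" using s2 unfolding r_def power2_eq_square by (metis norm_mult)
    thus ?thesis using real_sqrt_unique[of "cmod s" r] by simp
  qed
  have s0: "s \<noteq> 0" using s2 c(1) by auto
  have na: "cmod (a' j) = cmod s * cmod (a j)" for j
  proof -
    have "cmod (a' j) = sqrt ((cmod (a' j))\<^sup>2)" by simp
    also have "\<dots> = sqrt r * sqrt ((cmod (a j))\<^sup>2)" using sq[of j] by (simp add: real_sqrt_mult)
    finally show ?thesis using sn by simp
  qed
  have nb: "cmod (b' j) = cmod s * cmod (b j)" for j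
  proof -
    have "cmod (b' j) = sqrt ((cmod (b' j))\<^sup>2)" by simp
    also have "\<dots> = sqrt r * sqrt ((cmod (b j))\<^sup>2)" using sq[of j] by (simp add: real_sqrt_mult)
    finally show ?thesis using sn by simp
  qed
  define t where "t j = (if a j \<noteq> 0 then a' j / (s * a j) else if b j \<noteq> 0 then s * b j / b' j else 1)" for j
  have tt: "cmod (t j) = 1 \<and> a' j = s * (t j * a j) \<and> b' j = s * (inverse (t j) * b j)" for j
  proof (cases "a j \<noteq> 0")
    case True
    have a'0: "a' j \<noteq> 0" using na[of j] True s0 by auto
    have "cmod (t j) = 1" using True s0 na[of j] by (simp add: t_def norm_divide norm_mult)
    moreover have "a' j = s * (t j * a j)" using True s0 by (simp add: t_def)
    moreover have "b' j = s * (inverse (t j) * b j)"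
    proof -
      have "a' j * b' j = s * s * (a j * b j)" using w[of j] s2 by simp
      thus ?thesis using True s0 a'0 by (simp add: t_def field_simps)
    qed
    ultimately show ?thesis by blast
  next
    case False
    hence a'0: "a' j = 0" using na[of j] by simp
    show ?thesis
    proof (cases "b j \<noteq> 0")
      case True
      have b'0: "b' j \<noteq> 0" using nb[of j] True s0 by auto
      have "cmod (t j) = 1" using False True s0 nb[of j] by (simp add: t_def norm_divide norm_mult)
      thus ?thesis using False True s0 b'0 a'0 by (simp add: t_def field_simps)
    next
      case False2: False
      hence "b' j = 0" using nb[of j] by simp
      thus ?thesis using False False2 a'0 by (simp add: t_def)
    qed
  qed
  have "t \<in> torus" using tt by (simp add: torus_def)
  moreover have "proj_eq2 (act_a t a) (act_b t b) a' b'"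
    unfolding proj_eq2_def act_a_def act_b_def using tt s0 by blast
  ultimately show ?thesis by blast
qed

theorem lemma3p3:
  fixes j0 :: "'k::finite" and u :: "real^'k"
  assumes "CARD('k) \<ge> 2"
    and "u \<in> interior polyP"
  shows "(\<forall>a b. in_quadric a b \<and> moment a b = u \<longrightarrow> qmap j0 a b \<noteq> (\<lambda>_. 0))
       \<and> (\<forall>a b a' b'. in_quadric a b \<and> moment a b = u \<and> in_quadric a' b' \<and> moment a' b' = u \<longrightarrow>
            (proj_eq (qmap j0 a b) (qmap j0 a' b') \<longleftrightarrow>
             (\<exists>t\<in>torus. proj_eq2 (act_a t a) (act_b t b) a' b')))"
proof (intro conjI allI impI)
  fix a b assume h: "in_quadric a b \<and> moment a b = u"
  obtain j where "j \<noteq> j0" "a j * b j \<noteq> 0" using some_nonzero[of a b u j0] h assms(2) by blast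
  hence "qmap j0 a b j \<noteq> 0" by (simp add: qmap_def)
  thus "qmap j0 a b \<noteq> (\<lambda>_. 0)" by force
next
  fix a b a' b'
  assume h: "in_quadric a b \<and> moment a b = u \<and> in_quadric a' b' \<and> moment a' b' = u"
  show "proj_eq (qmap j0 a b) (qmap j0 a' b') \<longleftrightarrow>
             (\<exists>t\<in>torus. proj_eq2 (act_a t a) (act_b t b) a' b')"
  proof
    assume "proj_eq (qmap j0 a b) (qmap j0 a' b')"
    then obtain c where "c \<noteq> 0" "\<And>i. qmap j0 a' b' i = c * qmap j0 a b i"
      unfolding proj_eq_def by blast
    thus "\<exists>t\<in>torus. proj_eq2 (act_a t a) (act_b t b) a' b'"
      using forward[of a b u a' b' c j0] h assms(2) by blast
  next
    assume "\<exists>t\<in>torus. proj_eq2 (act_a t a) (act_b t b) a' b'"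
    then obtain t c where t: "t \<in> torus" and c: "c \<noteq> 0"
      and e: "\<And>j. a' j = c * (t j * a j) \<and> b' j = c * (inverse (t j) * b j)"
      unfolding proj_eq2_def act_a_def act_b_def by blast
    have t0: "t j \<noteq> 0" for j using t unfolding torus_def by (metis (mono_tags) mem_Collect_eq norm_zero zero_neq_one)
    have "qmap j0 a' b' i = (c * c) * qmap j0 a b i" for i
      using e[of i] t0[of i] by (simp add: qmap_def field_simps)
    thus "proj_eq (qmap j0 a b) (qmap j0 a' b')" unfolding proj_eq_def using c by (intro exI[of _ "c * c"]) simp
  qed
qed

end
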